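(* Let $f$ be a homeomorphism of a compact metric space $(X,d)$ with the L-shadowing property. Then for every $\epsilon>0$ there exists $\delta>0$ such that for every $x\in X$: if $V^s_\epsilon(x)\cap V^u_\epsilon(x)=\{x\}$ then $\Gamma_\delta(x)=\{x\}$.
   Context: L-shadowing: for every $\varepsilon>0$ there is $\delta>0$ such that every sequence $(x_k)_{k\in\mathbb{Z}}$ with $d(f(x_k),x_{k+1})\le\delta$ for all $k$ and $d(f(x_k),x_{k+1})\to0$ as $|k|\to\infty$ admits $z$ with $d(f^k(z),x_k)\le\varepsilon$ for all $k$ and $d(f^k(z),x_k)\to0$ as $|k|\to\infty$. $W^s_\epsilon(x)=\{y: d(f^n(x),f^n(y))\le\epsilon\ \forall n\ge0\}$, $W^u_\epsilon(x)=\{y: d(f^{-n}(x),f^{-n}(y))\le\epsilon\ \forall n\ge0\}$, $W^s(x)=\{y: d(f^n(x),f^n(y))\to0\ (n\to+\infty)\}$, $W^u(x)=\{y: d(f^{-n}(x),f^{-n}(y))\to0\ (n\to+\infty)\}$, $V^s_\epsilon(x)=W^s(x)\cap W^s_\epsilon(x)$, $V^u_\epsilon(x)=W^u(x)\cap W^u_\epsilon(x)$. Dynamical ball: $\Gamma_\delta(x)=\{y\in X: d(f^n(x),f^n(y))\le\delta\ \forall n\in\mathbb{Z}\}$. *)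

theory Defs
  imports "HOL-Analysis.Analysis"
begin

definition iter :: "('a \<Rightarrow> 'a) \<Rightarrow> ('a \<Rightarrow> 'a) \<Rightarrow> int \<Rightarrow> 'a \<Rightarrow> 'a" where
  "iter f g k = (if k \<ge> 0 then f ^^ nat k else g ^^ nat (- k))"

definition tends_to_zero_both :: "(int \<Rightarrow> real) \<Rightarrow> bool" where
  "tends_to_zero_both a \<longleftrightarrow> (a \<longlongrightarrow> 0) at_top \<and> (a \<longlongrightarrow> 0) at_bot"

definition L_shadowing :: "'a::metric_space set \<Rightarrow> ('a \<Rightarrow> 'a) \<Rightarrow> ('a \<Rightarrow> 'a) \<Rightarrow> bool" where
  "L_shadowing X f g \<longleftrightarrow>
    (\<forall>\<epsilon>>0. \<exists>\<delta>>0. \<forall>xs::int \<Rightarrow> 'a.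
       (\<forall>k. xs k \<in> X) \<and> (\<forall>k. dist (f (xs k)) (xs (k + 1)) \<le> \<delta>) \<and>
       tends_to_zero_both (\<lambda>k. dist (f (xs k)) (xs (k + 1)))
       \<longrightarrow> (\<exists>z\<in>X. (\<forall>k. dist (iter f g k z) (xs k) \<le> \<epsilon>) \<and>
                  tends_to_zero_both (\<lambda>k. dist (iter f g k z) (xs k))))"

definition local_stable :: "'a::metric_space set \<Rightarrow> ('a \<Rightarrow> 'a) \<Rightarrow> real \<Rightarrow> 'a \<Rightarrow> 'a set" where
  "local_stable X f e x = {y \<in> X. \<forall>n. dist ((f ^^ n) x) ((f ^^ n) y) \<le> e}"

definition local_unstable :: "'a::metric_space set \<Rightarrow> ('a \<Rightarrow> 'a) \<Rightarrow> real \<Rightarrow> 'a \<Rightarrow> 'a set" where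
  "local_unstable X g e x = {y \<in> X. \<forall>n. dist ((g ^^ n) x) ((g ^^ n) y) \<le> e}"

definition stable_set :: "'a::metric_space set \<Rightarrow> ('a \<Rightarrow> 'a) \<Rightarrow> 'a \<Rightarrow> 'a set" where
  "stable_set X f x = {y \<in> X. (\<lambda>n. dist ((f ^^ n) x) ((f ^^ n) y)) \<longlonglongrightarrow> 0}"

definition unstable_set :: "'a::metric_space set \<Rightarrow> ('a \<Rightarrow> 'a) \<Rightarrow> 'a \<Rightarrow> 'a set" where
  "unstable_set X g x = {y \<in> X. (\<lambda>n. dist ((g ^^ n) x) ((g ^^ n) y)) \<longlonglongrightarrow> 0}"

text \<open>V^s_e(x) = W^s(x) \<inter> W^s_e(x) and V^u_e(x) = W^u(x) \<inter> W^u_e(x); g is the inverse of f.\<close>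
definition V_s :: "'a::metric_space set \<Rightarrow> ('a \<Rightarrow> 'a) \<Rightarrow> real \<Rightarrow> 'a \<Rightarrow> 'a set" where
  "V_s X f e x = stable_set X f x \<inter> local_stable X f e x"

definition V_u :: "'a::metric_space set \<Rightarrow> ('a \<Rightarrow> 'a) \<Rightarrow> real \<Rightarrow> 'a \<Rightarrow> 'a set" where
  "V_u X g e x = unstable_set X g x \<inter> local_unstable X g e x"

definition dyn_ball :: "'a::metric_space set \<Rightarrow> ('a \<Rightarrow> 'a) \<Rightarrow> ('a \<Rightarrow> 'a) \<Rightarrow> real \<Rightarrow> 'a \<Rightarrow> 'a set" where
  "dyn_ball X f g \<delta> x = {y \<in> X. \<forall>k::int. dist (iter f g k x) (iter f g k y) \<le> \<delta>}"

end

theory Submission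
  imports Defs
begin

lemma funpow_in: "f ` X \<subseteq> X \<Longrightarrow> u \<in> X \<Longrightarrow> (f^^n) u \<in> X"
  by (induction n) auto

lemma hom_facts:
  assumes "homeomorphism X X f g"
  shows "f ` X \<subseteq> X" "g ` X \<subseteq> X" "\<And>u. u \<in> X \<Longrightarrow> g (f u) = u" "\<And>u. u \<in> X \<Longrightarrow> f (g u) = u"
    "continuous_on X f" "continuous_on X g"
  using assms unfolding homeomorphism_def by auto

lemma iter_in:
  assumes "homeomorphism X X f g" "u \<in> X"
  shows "iter f g k u \<in> X"
  using assms hom_facts[OF assms(1)] by (auto simp: iter_def intro: funpow_in)

lemma iter_zero[simp]: "iter f g 0 u = u"
  by (simp add: iter_def)

lemma iter_nat: "iter f g (int n) u = (f^^n) u"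
  by (simp add: iter_def)

lemma iter_neg_nat: "iter f g (- int n) u = (g^^n) u"
  by (cases "n = 0") (simp_all add: iter_def)

lemma iter_succ:
  assumes "homeomorphism X X f g" "u \<in> X"
  shows "iter f g (k+1) u = f (iter f g k u)"
proof (cases "k \<ge> 0")
  case True
  then have "nat (k+1) = Suc (nat k)" by simp
  with True show ?thesis by (simp add: iter_def)
next
  case False
  define m where "m = nat (-k-1)"
  have k: "k = - int (Suc m)" using False m_def by simp
  have in1: "(g^^m) u \<in> X" by (rule funpow_in[OF hom_facts(2)[OF assms(1)] assms(2)])
  have "iter f g k u = g ((g^^m) u)" unfolding k iter_neg_nat by simp
  moreover have "iter f g (k+1) u = (g^^m) u" unfolding k using iter_neg_nat[of f g m u] by simp
  ultimately show ?thesis using hom_facts(4)[OF assms(1) in1] by simp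
qed

lemma iter_pred:
  assumes "homeomorphism X X f g" "u \<in> X"
  shows "iter f g (k-1) u = g (iter f g k u)"
  using iter_succ[OF assms, of "k-1"] hom_facts(3)[OF assms(1) iter_in[OF assms]] by simp

lemma iter_add:
  assumes "homeomorphism X X f g" "u \<in> X"
  shows "iter f g a (iter f g b u) = iter f g (a+b) u"
proof (induction a rule: int_induct[where k=0])
  case base then show ?case by simp
next
  case (step1 i)
  have "iter f g (i+1) (iter f g b u) = f (iter f g i (iter f g b u))"
    by (rule iter_succ[OF assms(1) iter_in[OF assms]])
  also have "\<dots> = f (iter f g (i+b) u)" using step1 by simp
  also have "\<dots> = iter f g (i+b+1) u" by (rule iter_succ[OF assms, symmetric])
  finally show ?case by (simp add: ac_simps)
next
  case (step2 i)
  have "iter f g (i-1) (iter f g b u) = g (iter f g i (iter f g b u))"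
    by (rule iter_pred[OF assms(1) iter_in[OF assms]])
  also have "\<dots> = g (iter f g (i+b) u)" using step2 by simp
  also have "\<dots> = iter f g (i+b-1) u" by (rule iter_pred[OF assms, symmetric])
  finally show ?case by (simp add: algebra_simps)
qed

lemma iter_cont:
  assumes "homeomorphism X X f g"
  shows "continuous_on X (iter f g k)"
proof (induction k rule: int_induct[where k=0])
  case base then show ?case by (simp add: iter_def)
next
  case (step1 i)
  have "continuous_on X (f \<circ> iter f g i)"
    by (rule continuous_on_compose[OF step1(2)], rule continuous_on_subset[OF hom_facts(5)[OF assms]])
       (use iter_in[OF assms] in auto)
  then show ?case by (rule continuous_on_eq) (simp add: iter_succ[OF assms, symmetric])
next
  case (step2 i)
  have "continuous_on X (g \<circ> iter f g i)"
    by (rule continuous_on_compose[OF step2(2)], rule continuous_on_subset[OF hom_facts(6)[OF assms]])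
       (use iter_in[OF assms] in auto)
  then show ?case by (rule continuous_on_eq) (simp add: iter_pred[OF assms, symmetric])
qed

lemma iter_swap: "iter g f k u = iter f g (-k) u"
  by (simp add: iter_def)


lemma tz_iff: "tends_to_zero_both a \<longleftrightarrow> (\<forall>e>0. \<exists>N. \<forall>k. N \<le> \<bar>k\<bar> \<longrightarrow> \<bar>a k\<bar> < e)"
proof
  assume H: "tends_to_zero_both a"
  show "\<forall>e>0. \<exists>N. \<forall>k. N \<le> \<bar>k\<bar> \<longrightarrow> \<bar>a k\<bar> < e"
  proof (intro allI impI)
    fix e :: real assume e: "e > 0"
    have "eventually (\<lambda>k. dist (a k) 0 < e) at_top" "eventually (\<lambda>k. dist (a k) 0 < e) at_bot"
      using H e unfolding tends_to_zero_both_def tendsto_iff by auto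
    then obtain N1 N2 where N1: "\<forall>k\<ge>N1. \<bar>a k\<bar> < e" and N2: "\<forall>k\<le>N2. \<bar>a k\<bar> < e"
      unfolding eventually_at_top_linorder eventually_at_bot_linorder by auto
    show "\<exists>N. \<forall>k. N \<le> \<bar>k\<bar> \<longrightarrow> \<bar>a k\<bar> < e"
    proof (intro exI allI impI)
      fix k :: int assume "max \<bar>N1\<bar> \<bar>N2\<bar> \<le> \<bar>k\<bar>"
      then have "k \<ge> N1 \<or> k \<le> N2" by (cases "k \<ge> 0") auto
      then show "\<bar>a k\<bar> < e" using N1 N2 by auto
    qed
  qed
next
  assume H: "\<forall>e>0. \<exists>N. \<forall>k. N \<le> \<bar>k\<bar> \<longrightarrow> \<bar>a k\<bar> < e"
  have "eventually (\<lambda>k. dist (a k) 0 < e) at_top \<and> eventually (\<lambda>k. dist (a k) 0 < e) at_bot" if e: "e > 0" for e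
  proof -
    obtain N where N: "\<forall>k. N \<le> \<bar>k\<bar> \<longrightarrow> \<bar>a k\<bar> < e" using H e by blast
    have "\<forall>k\<ge>\<bar>N\<bar>. dist (a k) 0 < e" using N by auto
    moreover have "\<forall>k\<le>-\<bar>N\<bar>. dist (a k) 0 < e" using N by auto
    ultimately show ?thesis unfolding eventually_at_top_linorder eventually_at_bot_linorder by blast
  qed
  then show "tends_to_zero_both a" unfolding tends_to_zero_both_def tendsto_iff by auto
qed

lemma tz_zero: "\<forall>k. N \<le> \<bar>k\<bar> \<longrightarrow> a k = 0 \<Longrightarrow> tends_to_zero_both a"
  unfolding tz_iff by (intro allI impI exI[of _ N]) simp

lemma dyn_ball_swap: "dyn_ball X g f d x = dyn_ball X f g d x"
proof -
  have "(\<forall>k::int. dist (iter f g (-k) x) (iter f g (-k) y) \<le> d) \<longleftrightarrow> (\<forall>k. dist (iter f g k x) (iter f g k y) \<le> d)" for y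
  proof
    assume H: "\<forall>k::int. dist (iter f g (-k) x) (iter f g (-k) y) \<le> d"
    show "\<forall>k. dist (iter f g k x) (iter f g k y) \<le> d"
    proof
      fix k :: int show "dist (iter f g k x) (iter f g k y) \<le> d" using H[rule_format, of "-k"] by simp
    qed
  next
    assume H: "\<forall>k. dist (iter f g k x) (iter f g k y) \<le> d"
    show "\<forall>k::int. dist (iter f g (-k) x) (iter f g (-k) y) \<le> d"
    proof
      fix k :: int show "dist (iter f g (-k) x) (iter f g (-k) y) \<le> d" using H[rule_format, of "-k"] by simp
    qed
  qed
  then show ?thesis unfolding dyn_ball_def iter_swap[of g f] by simp
qed

lemma V_swap: "V_s X g e x = V_u X g e x"
  by (simp add: V_s_def V_u_def stable_set_def unstable_set_def local_stable_def local_unstable_def)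

lemma L_swap:
  fixes X :: "'a::metric_space set"
  assumes hom: "homeomorphism X X f g" and cX: "compact X" and L: "L_shadowing X f g"
  shows "L_shadowing X g f"
  unfolding L_shadowing_def
proof (intro allI impI)
  fix \<epsilon> :: real assume "\<epsilon> > 0"
  then obtain \<delta> where dp: "\<delta> > 0" and Hd: "\<forall>xs::int \<Rightarrow> 'a.
       (\<forall>k. xs k \<in> X) \<and> (\<forall>k. dist (f (xs k)) (xs (k + 1)) \<le> \<delta>) \<and>
       tends_to_zero_both (\<lambda>k. dist (f (xs k)) (xs (k + 1)))
       \<longrightarrow> (\<exists>z\<in>X. (\<forall>k. dist (iter f g k z) (xs k) \<le> \<epsilon>) \<and>
                  tends_to_zero_both (\<lambda>k. dist (iter f g k z) (xs k)))"
    using L unfolding L_shadowing_def by blast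
  have uc: "uniformly_continuous_on X f"
    by (rule compact_uniformly_continuous[OF hom_facts(5)[OF hom] cX])
  obtain \<rho> where rp: "\<rho> > 0" and rho: "\<forall>a\<in>X. \<forall>b\<in>X. dist b a < \<rho> \<longrightarrow> dist (f b) (f a) < \<delta>"
    using uc dp unfolding uniformly_continuous_on_def by blast
  show "\<exists>\<delta>>0. \<forall>ys::int \<Rightarrow> 'a.
       (\<forall>k. ys k \<in> X) \<and> (\<forall>k. dist (g (ys k)) (ys (k + 1)) \<le> \<delta>) \<and>
       tends_to_zero_both (\<lambda>k. dist (g (ys k)) (ys (k + 1)))
       \<longrightarrow> (\<exists>z\<in>X. (\<forall>k. dist (iter g f k z) (ys k) \<le> \<epsilon>) \<and>
                  tends_to_zero_both (\<lambda>k. dist (iter g f k z) (ys k)))"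
  proof (intro exI[of _ "\<rho>/2"] conjI allI impI)
    show "\<rho>/2 > 0" using rp by simp
    fix ys :: "int \<Rightarrow> 'a"
    assume H: "(\<forall>k. ys k \<in> X) \<and> (\<forall>k. dist (g (ys k)) (ys (k + 1)) \<le> \<rho>/2) \<and>
       tends_to_zero_both (\<lambda>k. dist (g (ys k)) (ys (k + 1)))"
    have ysX: "\<And>k. ys k \<in> X" using H by blast
    have gX: "\<And>k. g (ys k) \<in> X" using hom_facts(2)[OF hom] ysX by blast
    define xs where "xs k = ys (-k)" for k
    have eq: "dist (f (xs k)) (xs (k+1)) = dist (f (ys (-k))) (f (g (ys (-k-1))))" for k
    proof -
      have a: "xs (k+1) = ys (-k-1)" unfolding xs_def by (rule arg_cong[where f=ys]) simp
      have b: "f (g (ys (-k-1))) = ys (-k-1)" by (rule hom_facts(4)[OF hom ysX])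
      show ?thesis unfolding a b by (simp only: xs_def)
    qed
    have eq2: "dist (g (ys (-k-1))) (ys (-k)) = dist (g (ys (-k-1))) (ys ((-k-1) + 1))" for k
      by simp
    have jb: "dist (f (xs k)) (xs (k+1)) \<le> \<delta>" for k
    proof -
      have "dist (g (ys (-k-1))) (ys (-k)) < \<rho>" using H eq2[of k] rp
        by (smt (verit, best) field_sum_of_halves)
      then have "dist (f (ys (-k))) (f (g (ys (-k-1)))) < \<delta>"
        using rho ysX gX by (metis dist_commute)
      then show ?thesis using eq[of k] by simp
    qed
    have tzg: "\<forall>e>0. \<exists>N. \<forall>k. N \<le> \<bar>k\<bar> \<longrightarrow> dist (g (ys k)) (ys (k + 1)) < e"
      using H unfolding tz_iff by auto
    have tzf: "tends_to_zero_both (\<lambda>k. dist (f (xs k)) (xs (k + 1)))"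
      unfolding tz_iff
    proof (intro allI impI)
      fix e :: real assume e: "e > 0"
      obtain r where r: "r > 0" and rr: "\<forall>a\<in>X. \<forall>b\<in>X. dist b a < r \<longrightarrow> dist (f b) (f a) < e"
        using uc e unfolding uniformly_continuous_on_def by blast
      obtain N where N: "\<forall>k. N \<le> \<bar>k\<bar> \<longrightarrow> dist (g (ys k)) (ys (k + 1)) < r" using tzg r by blast
      show "\<exists>N. \<forall>k. N \<le> \<bar>k\<bar> \<longrightarrow> \<bar>dist (f (xs k)) (xs (k + 1))\<bar> < e"
      proof (intro exI allI impI)
        fix k :: int assume "\<bar>N\<bar> + 1 \<le> \<bar>k\<bar>"
        then have "N \<le> \<bar>-k-1\<bar>" by auto
        then have "dist (g (ys (-k-1))) (ys ((-k-1)+1)) < r" using N by blast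
        then have "dist (g (ys (-k-1))) (ys (-k)) < r" by simp
        then have "dist (f (ys (-k))) (f (g (ys (-k-1)))) < e"
          using rr ysX gX by (metis dist_commute)
        then show "\<bar>dist (f (xs k)) (xs (k + 1))\<bar> < e" using eq[of k] by simp
      qed
    qed
    obtain z where zX: "z \<in> X" and z1: "\<forall>k. dist (iter f g k z) (xs k) \<le> \<epsilon>"
      and z2: "tends_to_zero_both (\<lambda>k. dist (iter f g k z) (xs k))"
      using Hd[rule_format, of xs] ysX jb tzf unfolding xs_def by blast
    show "\<exists>z\<in>X. (\<forall>k. dist (iter g f k z) (ys k) \<le> \<epsilon>) \<and>
                  tends_to_zero_both (\<lambda>k. dist (iter g f k z) (ys k))"
    proof (intro bexI[OF _ zX] conjI allI)
      fix k show "dist (iter g f k z) (ys k) \<le> \<epsilon>" using z1[rule_format, of "-k"] by (simp add: iter_swap[of g f] xs_def)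
    next
      show "tends_to_zero_both (\<lambda>k. dist (iter g f k z) (ys k))"
        unfolding tz_iff
      proof (intro allI impI)
        fix e :: real assume "e > 0"
        then obtain N where N: "\<forall>k. N \<le> \<bar>k\<bar> \<longrightarrow> \<bar>dist (iter f g k z) (xs k)\<bar> < e" using z2 unfolding tz_iff by blast
        show "\<exists>N. \<forall>k. N \<le> \<bar>k\<bar> \<longrightarrow> \<bar>dist (iter g f k z) (ys k)\<bar> < e"
        proof (intro exI[of _ N] allI impI)
          fix k :: int assume "N \<le> \<bar>k\<bar>"
          then have "N \<le> \<bar>-k\<bar>" by simp
          then have "\<bar>dist (iter f g (-k) z) (xs (-k))\<bar> < e" using N by blast
          then show "\<bar>dist (iter g f k z) (ys k)\<bar> < e" by (simp add: iter_swap[of g f] xs_def)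
        qed
      qed
    qed
  qed
qed

lemma jump_orbit:
  assumes hom: "homeomorphism X X f g" and uX: "u \<in> X" and vX: "v \<in> X"
  assumes xs_def: "xs = (\<lambda>k. if k < 0 then iter f g k u else iter f g k v)"
  shows "dist (f (xs k)) (xs (k+1)) = (if k = -1 then dist u v else 0)"
proof -
  have s: "f (iter f g j w) = iter f g (j+1) w" if "w \<in> X" for w j
    using iter_succ[OF hom that] by simp
  consider "k < -1" | "k = -1" | "k \<ge> 0" by linarith
  then show ?thesis
  proof cases
    case 1 then show ?thesis using s[OF uX] by (simp add: xs_def)
  next
    case 2
    have "f (iter f g (-1) u) = u" using s[OF uX, of "-1"] by simp
    then show ?thesis using 2 by (simp add: xs_def)
  next
    case 3 then show ?thesis using s[OF vX] by (simp add: xs_def)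
  qed
qed

lemma orbit_shadow:
  assumes hom: "homeomorphism X X f g" and uX: "u \<in> X" and vX: "v \<in> X"
    and duv: "dist u v \<le> \<delta>" and dp: "\<delta> > 0"
    and Hd: "\<forall>xs. (\<forall>k. xs k \<in> X) \<and> (\<forall>k. dist (f (xs k)) (xs (k + 1)) \<le> \<delta>) \<and>
       tends_to_zero_both (\<lambda>k. dist (f (xs k)) (xs (k + 1)))
       \<longrightarrow> (\<exists>z\<in>X. (\<forall>k. dist (iter f g k z) (xs k) \<le> e) \<and>
                  tends_to_zero_both (\<lambda>k. dist (iter f g k z) (xs k)))"
  shows "\<exists>z\<in>X. (\<forall>k. dist (iter f g k z) (if k < 0 then iter f g k u else iter f g k v) \<le> e) \<and>
       (\<forall>r>0. \<exists>N. \<forall>k. N \<le> \<bar>k\<bar> \<longrightarrow> dist (iter f g k z) (if k < 0 then iter f g k u else iter f g k v) < r)"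
proof -
  define xs where "xs \<equiv> \<lambda>k. if k < 0 then iter f g k u else iter f g k v"
  have j: "dist (f (xs k)) (xs (k+1)) = (if k = -1 then dist u v else 0)" for k
    by (rule jump_orbit[OF hom uX vX]) (simp add: xs_def)
  have X: "\<forall>k. xs k \<in> X" using iter_in[OF hom uX] iter_in[OF hom vX] by (simp add: xs_def)
  have b: "\<forall>k. dist (f (xs k)) (xs (k + 1)) \<le> \<delta>" using j duv dp by simp
  have t: "tends_to_zero_both (\<lambda>k. dist (f (xs k)) (xs (k + 1)))"
    by (rule tz_zero[of 2]) (use j in auto)
  obtain z where zX: "z \<in> X" and z1: "\<forall>k. dist (iter f g k z) (xs k) \<le> e"
    and z2: "tends_to_zero_both (\<lambda>k. dist (iter f g k z) (xs k))"
    using Hd X b t by blast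
  have z3: "\<forall>r>0. \<exists>N. \<forall>k. N \<le> \<bar>k\<bar> \<longrightarrow> dist (iter f g k z) (xs k) < r"
    using z2 unfolding tz_iff by simp
  show ?thesis using zX z1 z3 unfolding xs_def by blast
qed


lemma main_stable:
  fixes X :: "'a::metric_space set"
  assumes hom: "homeomorphism X X f g" and cX: "compact X" and Ls: "L_shadowing X f g"
    and ep: "\<epsilon> > 0" and dp: "\<delta> > 0" "\<delta> \<le> \<epsilon>/3"
    and Hd: "\<forall>xs. (\<forall>k. xs k \<in> X) \<and> (\<forall>k. dist (f (xs k)) (xs (k + 1)) \<le> \<delta>) \<and>
       tends_to_zero_both (\<lambda>k. dist (f (xs k)) (xs (k + 1)))
       \<longrightarrow> (\<exists>z\<in>X. (\<forall>k. dist (iter f g k z) (xs k) \<le> \<epsilon>/3) \<and>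
                  tends_to_zero_both (\<lambda>k. dist (iter f g k z) (xs k)))"
    and xX: "x \<in> X" and V: "V_s X f \<epsilon> x \<inter> V_u X g \<epsilon> x = {x}"
    and y: "y \<in> dyn_ball X f g \<delta> x"
  shows "(\<lambda>n. dist ((f^^n) x) ((f^^n) y)) \<longlonglongrightarrow> 0"
proof (rule ccontr)
  assume nc: "\<not> ?thesis"
  obtain c where c: "c > 0" and cN: "\<forall>N. \<exists>n\<ge>N. c \<le> dist ((f^^n) x) ((f^^n) y)"
    using nc unfolding LIMSEQ_iff by (auto simp: not_less)
  have yX: "y \<in> X" and yd: "\<And>k. dist (iter f g k x) (iter f g k y) \<le> \<delta>"
    using y by (auto simp: dyn_ball_def)
  have I_in: "\<And>u k. u \<in> X \<Longrightarrow> iter f g k u \<in> X" using iter_in[OF hom] by blast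
  have I_s: "\<And>u k. u \<in> X \<Longrightarrow> f (iter f g k u) = iter f g (k+1) u"
    using iter_succ[OF hom] by metis
  have dxy: "dist x y \<le> \<delta>" using yd[of 0] by simp
  obtain z where zX: "z \<in> X"
    and z1: "\<forall>k. dist (iter f g k z) (if k < 0 then iter f g k x else iter f g k y) \<le> \<epsilon>/3"
    and z2: "\<forall>r>0. \<exists>N. \<forall>k. N \<le> \<bar>k\<bar> \<longrightarrow> dist (iter f g k z) (if k < 0 then iter f g k x else iter f g k y) < r"
    using orbit_shadow[OF hom xX yX dxy dp(1) Hd] by blast
  obtain K0 where K0: "\<forall>k. K0 \<le> \<bar>k\<bar> \<longrightarrow> dist (iter f g k z) (if k < 0 then iter f g k x else iter f g k y) < c/4"
    using z2 c by (meson zero_less_divide_iff zero_less_numeral)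
  obtain n1 where n1: "n1 \<ge> nat K0" and n1c: "c \<le> dist ((f^^n1) x) ((f^^n1) y)" using cN by blast
  have n1dev: "3*c/4 < dist (iter f g (int n1) z) (iter f g (int n1) x)"
  proof -
    have "K0 \<le> \<bar>int n1\<bar>" using n1 by linarith
    then have "dist (iter f g (int n1) z) (iter f g (int n1) y) < c/4" using K0 by fastforce
    moreover have "c \<le> dist (iter f g (int n1) x) (iter f g (int n1) y)" using n1c by (simp add: iter_nat)
    moreover have "dist (iter f g (int n1) x) (iter f g (int n1) y) \<le>
        dist (iter f g (int n1) z) (iter f g (int n1) x) + dist (iter f g (int n1) z) (iter f g (int n1) y)"
      by (rule dist_triangle3)
    ultimately show ?thesis by linarith
  qed
  define \<epsilon>2 where "\<epsilon>2 = min (\<epsilon>/6) (c/2)"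
  have e2p: "\<epsilon>2 > 0" using ep c by (simp add: \<epsilon>2_def)
  obtain \<delta>2 where d2p: "\<delta>2 > 0" and H2: "\<forall>xs::int \<Rightarrow> 'a.
       (\<forall>k. xs k \<in> X) \<and> (\<forall>k. dist (f (xs k)) (xs (k + 1)) \<le> \<delta>2) \<and>
       tends_to_zero_both (\<lambda>k. dist (f (xs k)) (xs (k + 1)))
       \<longrightarrow> (\<exists>z\<in>X. (\<forall>k. dist (iter f g k z) (xs k) \<le> \<epsilon>2) \<and>
                  tends_to_zero_both (\<lambda>k. dist (iter f g k z) (xs k)))"
    using Ls e2p unfolding L_shadowing_def by blast
  define \<eta> where "\<eta> = min (\<epsilon>/6) (\<delta>2/3)"
  have etap: "\<eta> > 0" using ep d2p by (simp add: \<eta>_def)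
  have "seq_compact (X \<times> X)" by (rule compact_imp_seq_compact[OF compact_Times[OF cX cX]])
  moreover have "\<forall>n. ((f^^n) x, (f^^n) y) \<in> X \<times> X"
  proof
    fix n show "((f^^n) x, (f^^n) y) \<in> X \<times> X"
      using I_in[OF xX, of "int n"] I_in[OF yX, of "int n"] by (simp add: iter_nat)
  qed
  ultimately obtain pq r where pqX: "pq \<in> X \<times> X" and r: "strict_mono r"
    and lim: "((\<lambda>n. ((f^^n) x, (f^^n) y)) \<circ> r) \<longlonglongrightarrow> pq"
    unfolding seq_compact_def by meson
  obtain p q where pq: "pq = (p, q)" by fastforce
  have pX: "p \<in> X" and qX: "q \<in> X" using pqX pq by auto
  have px: "(\<lambda>n. (f^^(r n)) x) \<longlonglongrightarrow> p" using tendsto_fst[OF lim] pq by (simp add: o_def)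
  have qy: "(\<lambda>n. (f^^(r n)) y) \<longlonglongrightarrow> q" using tendsto_snd[OF lim] pq by (simp add: o_def)
  have dqp: "dist q p \<le> \<delta>"
  proof -
    have "(\<lambda>n. dist ((f^^(r n)) x) ((f^^(r n)) y)) \<longlonglongrightarrow> dist p q" by (rule tendsto_dist[OF px qy])
    moreover have "\<forall>n. dist ((f^^(r n)) x) ((f^^(r n)) y) \<le> \<delta>" using yd by (metis iter_nat)
    ultimately have "dist p q \<le> \<delta>" by (meson LIMSEQ_le_const2)
    then show ?thesis by (simp add: dist_commute)
  qed
  obtain D where DX: "D \<in> X"
    and D1: "\<forall>k. dist (iter f g k D) (if k < 0 then iter f g k q else iter f g k p) \<le> \<epsilon>/3"
    and D2: "\<forall>r>0. \<exists>N. \<forall>k. N \<le> \<bar>k\<bar> \<longrightarrow> dist (iter f g k D) (if k < 0 then iter f g k q else iter f g k p) < r"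
    using orbit_shadow[OF hom qX pX dqp dp(1) Hd] by blast
  obtain L0 where L0: "\<forall>k. L0 \<le> \<bar>k\<bar> \<longrightarrow> dist (iter f g k D) (if k < 0 then iter f g k q else iter f g k p) < \<eta>"
    using D2 etap by blast
  define L where "L = max L0 1"
  have L1: "L \<ge> 1" and LL0: "L0 \<le> L" by (simp_all add: L_def)
  have DLp: "dist (iter f g L D) (iter f g L p) < \<eta>"
    using L0[rule_format, of L] L1 LL0 by simp
  have DLq: "dist (iter f g (-L) D) (iter f g (-L) q) < \<eta>"
    using L0[rule_format, of "-L"] L1 LL0 by simp
  obtain K1 where K1: "\<forall>k. K1 \<le> \<bar>k\<bar> \<longrightarrow> dist (iter f g k z) (if k < 0 then iter f g k x else iter f g k y) < \<eta>"
    using z2 etap by blast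
  have inx: "\<And>n. (f^^n) x \<in> X" using I_in[OF xX] by (metis iter_nat)
  have iny: "\<And>n. (f^^n) y \<in> X" using I_in[OF yX] by (metis iter_nat)
  have ev: "eventually (\<lambda>n. \<forall>m\<in>{-L..L}. dist (iter f g m p) (iter f g m ((f^^(r n)) x)) < \<eta> \<and>
         dist (iter f g m q) (iter f g m ((f^^(r n)) y)) < \<eta>) sequentially"
  proof (rule eventually_ball_finite)
    show "finite {-L..L}" by simp
    show "\<forall>m\<in>{-L..L}. eventually (\<lambda>n. dist (iter f g m p) (iter f g m ((f^^(r n)) x)) < \<eta> \<and>
         dist (iter f g m q) (iter f g m ((f^^(r n)) y)) < \<eta>) sequentially"
    proof
      fix m assume "m \<in> {-L..L}"
      have c1: "(\<lambda>n. iter f g m ((f^^(r n)) x)) \<longlonglongrightarrow> iter f g m p"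
        by (rule continuous_on_tendsto_compose[OF iter_cont[OF hom] px pX])
           (intro always_eventually allI, use inx in blast)
      have c2: "(\<lambda>n. iter f g m ((f^^(r n)) y)) \<longlonglongrightarrow> iter f g m q"
        by (rule continuous_on_tendsto_compose[OF iter_cont[OF hom] qy qX])
           (intro always_eventually allI, use iny in blast)
      show "eventually (\<lambda>n. dist (iter f g m p) (iter f g m ((f^^(r n)) x)) < \<eta> \<and>
         dist (iter f g m q) (iter f g m ((f^^(r n)) y)) < \<eta>) sequentially"
      proof -
        have e1: "eventually (\<lambda>n. dist (iter f g m ((f^^(r n)) x)) (iter f g m p) < \<eta>) sequentially"
          using tendsto_iff[THEN iffD1, OF c1] etap by blast
        have e2: "eventually (\<lambda>n. dist (iter f g m ((f^^(r n)) y)) (iter f g m q) < \<eta>) sequentially"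
          using tendsto_iff[THEN iffD1, OF c2] etap by blast
        show ?thesis using eventually_conj[OF e1 e2] by (simp add: dist_commute)
      qed
    qed
  qed
  then obtain N1 where N1: "\<forall>n\<ge>N1. \<forall>m\<in>{-L..L}. dist (iter f g m p) (iter f g m ((f^^(r n)) x)) < \<eta> \<and>
         dist (iter f g m q) (iter f g m ((f^^(r n)) y)) < \<eta>"
    unfolding eventually_sequentially by blast
  define n where "n = max N1 (nat (\<bar>K1\<bar> + L + int n1 + 1))"
  define t where "t = int (r n)"
  have tn: "t \<ge> int n" using seq_suble[OF r, of n] by (simp add: t_def)
  have tL: "t - L \<ge> \<bar>K1\<bar>" "t - L > int n1" "t - L \<ge> 0"
    using tn L1 unfolding n_def by auto
  have W: "\<forall>m\<in>{-L..L}. dist (iter f g m p) (iter f g (m + t) x) < \<eta> \<and>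
         dist (iter f g m q) (iter f g (m + t) y) < \<eta>"
  proof -
    have a: "(f^^(r n)) x = iter f g t x" "(f^^(r n)) y = iter f g t y" by (simp_all add: t_def iter_nat)
    have "n \<ge> N1" by (simp add: n_def)
    show ?thesis
    proof (intro ballI)
      fix m assume m: "m \<in> {-L..L}"
      have h: "dist (iter f g m p) (iter f g m ((f^^(r n)) x)) < \<eta> \<and>
         dist (iter f g m q) (iter f g m ((f^^(r n)) y)) < \<eta>"
        using N1 \<open>n \<ge> N1\<close> m by blast
      show "dist (iter f g m p) (iter f g (m + t) x) < \<eta> \<and> dist (iter f g m q) (iter f g (m + t) y) < \<eta>"
        using h unfolding a iter_add[OF hom xX] iter_add[OF hom yX] .
    qed
  qed
  define P where "P k = (if k < t - L then iter f g k z else if k < t + L then iter f g (k - t) D else iter f g k x)" for k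
  have PX: "P k \<in> X" for k using I_in[OF zX] I_in[OF DX] I_in[OF xX] by (simp add: P_def)
  have zy: "dist (iter f g k z) (iter f g k y) < \<eta>" if "k \<ge> t - L" for k
  proof -
    have "\<bar>K1\<bar> \<le> k" "0 \<le> k" using that tL by auto
    then show ?thesis using K1[rule_format, of k] by auto
  qed
  have jumpP: "dist (f (P k)) (P (k+1)) \<le> (if k = t - L - 1 \<or> k = t + L - 1 then 3*\<eta> else 0)" for k
  proof -
    consider "k + 1 < t - L" | "k = t - L - 1" | "t - L \<le> k" "k + 1 < t + L" | "k = t + L - 1" | "k \<ge> t + L"
      by linarith
    then show ?thesis
    proof cases
      case 1 then show ?thesis using I_s[OF zX, of k] etap by (simp add: P_def)
    next
      case 2
      have fP: "f (P k) = iter f g (t - L) z" using 2 I_s[OF zX, of k] by (simp add: P_def)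
      have P1: "P (k+1) = iter f g (-L) D" using 2 L1 by (simp add: P_def)
      have a1: "dist (iter f g (t-L) z) (iter f g (t-L) y) < \<eta>" using zy by simp
      have a2: "dist (iter f g (-L) q) (iter f g (-L + t) y) < \<eta>" using W[rule_format, of "-L"] L1 by simp
      have "dist (iter f g (t - L) z) (iter f g (-L) D) \<le> dist (iter f g (t-L) z) (iter f g (t-L) y)
          + dist (iter f g (-L) q) (iter f g (-L + t) y) + dist (iter f g (-L) D) (iter f g (-L) q)"
        by (smt (verit) dist_commute dist_triangle add.commute uminus_add_conv_diff)
      then show ?thesis using fP P1 a1 a2 DLq 2 by simp
    next
      case 3
      have "f (P k) = iter f g (k - t + 1) D" using 3 I_s[OF DX, of "k-t"] by (simp add: P_def)
      moreover have "P (k+1) = iter f g (k - t + 1) D" using 3 by (simp add: P_def algebra_simps)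
      ultimately show ?thesis using etap by simp
    next
      case 4
      have fP: "f (P k) = iter f g L D" using 4 L1 I_s[OF DX, of "L - 1"] by (simp add: P_def)
      have P1: "P (k+1) = iter f g (L + t) x" using 4 L1 by (simp add: P_def add.commute)
      have a2: "dist (iter f g L p) (iter f g (L + t) x) < \<eta>" using W[rule_format, of L] L1 by simp
      have "dist (iter f g L D) (iter f g (L + t) x) \<le> dist (iter f g L D) (iter f g L p) + dist (iter f g L p) (iter f g (L + t) x)"
        by (rule dist_triangle)
      then show ?thesis using fP P1 a2 DLp 4 etap by simp
    next
      case 5 then show ?thesis using I_s[OF xX, of k] etap L1 by (simp add: P_def)
    qed
  qed
  have jb: "\<forall>k. dist (f (P k)) (P (k+1)) \<le> \<delta>2"
  proof
    fix k
    have "3 * \<eta> \<le> \<delta>2" unfolding \<eta>_def by linarith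
    then show "dist (f (P k)) (P (k+1)) \<le> \<delta>2" using jumpP[of k] etap d2p
      by (auto split: if_splits)
  qed
  have jt: "tends_to_zero_both (\<lambda>k. dist (f (P k)) (P (k + 1)))"
  proof (rule tz_zero[of "\<bar>t\<bar> + L + 2"], intro allI impI)
    fix k assume "\<bar>t\<bar> + L + 2 \<le> \<bar>k\<bar>"
    then have "\<not> (k = t - L - 1 \<or> k = t + L - 1)" using L1 by auto
    then show "dist (f (P k)) (P (k + 1)) = 0" using jumpP[of k] by simp
  qed
  obtain w where wX: "w \<in> X" and w1: "\<forall>k. dist (iter f g k w) (P k) \<le> \<epsilon>2"
    and w2: "tends_to_zero_both (\<lambda>k. dist (iter f g k w) (P k))"
    using H2[rule_format, of P] PX jb jt by blast
  have tube: "dist (P k) (iter f g k x) \<le> 5*\<epsilon>/6" for k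
  proof -
    have etab: "\<eta> \<le> \<epsilon>/6" by (simp add: \<eta>_def)
    consider "k < t - L" "k < 0" | "k < t - L" "k \<ge> 0" | "t - L \<le> k" "k < t" | "t \<le> k" "k < t + L" | "k \<ge> t + L"
      by linarith
    then show ?thesis
    proof cases
      case 1 then show ?thesis using z1[rule_format, of k] ep by (simp add: P_def)
    next
      case 2
      have "dist (iter f g k z) (iter f g k x) \<le> dist (iter f g k z) (iter f g k y) + dist (iter f g k x) (iter f g k y)"
        by (rule dist_triangle2)
      then show ?thesis using 2 z1[rule_format, of k] yd[of k] dp ep by (simp add: P_def)
    next
      case 3
      define m where "m = k - t"
      have m: "m < 0" "m \<in> {-L..L}" "k = m + t" using 3 by (auto simp: m_def)
      have b1: "dist (iter f g m D) (iter f g m q) \<le> \<epsilon>/3" using D1[rule_format, of m] m by simp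
      have b2: "dist (iter f g m q) (iter f g k y) < \<eta>" using W[rule_format, OF m(2)] m(3) by simp
      have "dist (iter f g m D) (iter f g k x) \<le> dist (iter f g m D) (iter f g m q) + dist (iter f g m q) (iter f g k y) + dist (iter f g k x) (iter f g k y)"
        by (smt (verit) dist_commute dist_triangle)
      then show ?thesis using 3 b1 b2 yd[of k] dp etab m ep by (simp add: P_def)
    next
      case 4
      define m where "m = k - t"
      have m: "m \<ge> 0" "m \<in> {-L..L}" "k = m + t" using 4 by (auto simp: m_def)
      have b1: "dist (iter f g m D) (iter f g m p) \<le> \<epsilon>/3" using D1[rule_format, of m] m by simp
      have b2: "dist (iter f g m p) (iter f g k x) < \<eta>" using W[rule_format, OF m(2)] m(3) by simp
      have "dist (iter f g m D) (iter f g k x) \<le> dist (iter f g m D) (iter f g m p) + dist (iter f g m p) (iter f g k x)"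
        by (rule dist_triangle)
      then show ?thesis using 4 b1 b2 etab m L1 ep by (simp add: P_def)
    next
      case 5 then show ?thesis using ep L1 by (simp add: P_def)
    qed
  qed
  have e2b: "\<epsilon>2 \<le> \<epsilon>/6" "\<epsilon>2 \<le> c/2" by (simp_all add: \<epsilon>2_def)
  have wtube: "dist (iter f g k w) (iter f g k x) \<le> \<epsilon>" for k
  proof -
    have "dist (iter f g k w) (iter f g k x) \<le> dist (iter f g k w) (P k) + dist (P k) (iter f g k x)"
      by (rule dist_triangle)
    then show ?thesis using w1[rule_format, of k] tube[of k] e2b by linarith
  qed
  have wasym: "\<exists>N. \<forall>k. N \<le> \<bar>k\<bar> \<longrightarrow> dist (iter f g k w) (iter f g k x) < e" if e: "e > 0" for e
  proof -
    obtain Nw where Nw: "\<forall>k. Nw \<le> \<bar>k\<bar> \<longrightarrow> dist (iter f g k w) (P k) < e/2"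
    proof -
      have "\<forall>r>0. \<exists>N. \<forall>k. N \<le> \<bar>k\<bar> \<longrightarrow> dist (iter f g k w) (P k) < r"
        using w2 unfolding tz_iff by simp
      then show ?thesis using e that by (meson half_gt_zero)
    qed
    obtain Nz where Nz: "\<forall>k. Nz \<le> \<bar>k\<bar> \<longrightarrow> dist (iter f g k z) (if k < 0 then iter f g k x else iter f g k y) < e/2"
      using z2 e by (meson half_gt_zero)
    show ?thesis
    proof (intro exI allI impI)
      fix k assume k: "max (max Nw Nz) (\<bar>t\<bar> + L + 1) \<le> \<bar>k\<bar>"
      have kw: "dist (iter f g k w) (P k) < e/2" using Nw k by auto
      show "dist (iter f g k w) (iter f g k x) < e"
      proof (cases "k \<ge> t + L")
        case True
        then have "P k = iter f g k x" using L1 by (simp add: P_def)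
        then show ?thesis using kw e by simp
      next
        case False
        then have kneg: "k < 0" "k < t - L" using k L1 by auto
        have "Nz \<le> \<bar>k\<bar>" using k by auto
        then have "dist (iter f g k z) (if k < 0 then iter f g k x else iter f g k y) < e/2" using Nz by blast
        then have kz: "dist (iter f g k z) (iter f g k x) < e/2" using kneg by simp
        have "dist (iter f g k w) (iter f g k x) \<le> dist (iter f g k w) (iter f g k z) + dist (iter f g k z) (iter f g k x)"
          by (rule dist_triangle)
        moreover have "P k = iter f g k z" using kneg by (simp add: P_def)
        ultimately show ?thesis using kw kz by (simp add: dist_commute)
      qed
    qed
  qed
  have wV: "w \<in> V_s X f \<epsilon> x \<inter> V_u X g \<epsilon> x"
  proof -
    have st: "(\<lambda>n. dist ((f^^n) x) ((f^^n) w)) \<longlonglongrightarrow> 0"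
      unfolding LIMSEQ_iff
    proof (intro allI impI)
      fix e :: real assume "e > 0"
      then obtain N where N: "\<forall>k. N \<le> \<bar>k\<bar> \<longrightarrow> dist (iter f g k w) (iter f g k x) < e" using wasym by blast
      show "\<exists>no. \<forall>n\<ge>no. norm (dist ((f^^n) x) ((f^^n) w) - 0) < e"
      proof (intro exI allI impI)
        fix n assume "nat N \<le> n"
        then have "N \<le> \<bar>int n\<bar>" by linarith
        then have "dist (iter f g (int n) w) (iter f g (int n) x) < e" using N by blast
        then show "norm (dist ((f^^n) x) ((f^^n) w) - 0) < e" by (simp add: iter_nat dist_commute)
      qed
    qed
    have ust: "(\<lambda>n. dist ((g^^n) x) ((g^^n) w)) \<longlonglongrightarrow> 0"
      unfolding LIMSEQ_iff
    proof (intro allI impI)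
      fix e :: real assume "e > 0"
      then obtain N where N: "\<forall>k. N \<le> \<bar>k\<bar> \<longrightarrow> dist (iter f g k w) (iter f g k x) < e" using wasym by blast
      show "\<exists>no. \<forall>n\<ge>no. norm (dist ((g^^n) x) ((g^^n) w) - 0) < e"
      proof (intro exI allI impI)
        fix n assume "nat N \<le> n"
        then have "N \<le> \<bar>- int n\<bar>" by linarith
        then have "dist (iter f g (- int n) w) (iter f g (- int n) x) < e" using N by blast
        then show "norm (dist ((g^^n) x) ((g^^n) w) - 0) < e" by (auto simp: iter_neg_nat dist_commute)
      qed
    qed
    have ls: "\<forall>n. dist ((f^^n) x) ((f^^n) w) \<le> \<epsilon>"
      using wtube by (metis iter_nat dist_commute)
    have lu: "\<forall>n. dist ((g^^n) x) ((g^^n) w) \<le> \<epsilon>"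
      using wtube by (metis iter_neg_nat dist_commute)
    show ?thesis using st ust ls lu wX
      by (simp add: V_s_def V_u_def stable_set_def unstable_set_def local_stable_def local_unstable_def)
  qed
  then have "w = x" using V by blast
  then have "dist (iter f g (int n1) x) (P (int n1)) \<le> \<epsilon>2" using w1 by blast
  moreover have "P (int n1) = iter f g (int n1) z" using tL by (simp add: P_def)
  ultimately show False using n1dev e2b c by (simp add: dist_commute)
qed

theorem mainTheorem12:
  fixes X :: "'a::metric_space set" and f g :: "'a \<Rightarrow> 'a"
  assumes "compact X"
    and "homeomorphism X X f g"
    and "L_shadowing X f g"
  shows "\<forall>\<epsilon>>0. \<exists>\<delta>>0. \<forall>x\<in>X.
           V_s X f \<epsilon> x \<inter> V_u X g \<epsilon> x = {x} \<longrightarrow> dyn_ball X f g \<delta> x = {x}"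
proof (intro allI impI)
  fix \<epsilon> :: real assume ep: "\<epsilon> > 0"
  have hom': "homeomorphism X X g f" by (rule homeomorphism_symD[OF assms(2)])
  have Lg: "L_shadowing X g f" by (rule L_swap[OF assms(2) assms(1) assms(3)])
  have e3: "\<epsilon>/3 > 0" using ep by simp
  obtain df where dfp: "df > 0" and Hf: "\<forall>xs::int \<Rightarrow> 'a.
       (\<forall>k. xs k \<in> X) \<and> (\<forall>k. dist (f (xs k)) (xs (k + 1)) \<le> df) \<and>
       tends_to_zero_both (\<lambda>k. dist (f (xs k)) (xs (k + 1)))
       \<longrightarrow> (\<exists>z\<in>X. (\<forall>k. dist (iter f g k z) (xs k) \<le> \<epsilon>/3) \<and>
                  tends_to_zero_both (\<lambda>k. dist (iter f g k z) (xs k)))"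
    using assms(3) e3 unfolding L_shadowing_def by blast
  obtain dg where dgp: "dg > 0" and Hg: "\<forall>xs::int \<Rightarrow> 'a.
       (\<forall>k. xs k \<in> X) \<and> (\<forall>k. dist (g (xs k)) (xs (k + 1)) \<le> dg) \<and>
       tends_to_zero_both (\<lambda>k. dist (g (xs k)) (xs (k + 1)))
       \<longrightarrow> (\<exists>z\<in>X. (\<forall>k. dist (iter g f k z) (xs k) \<le> \<epsilon>/3) \<and>
                  tends_to_zero_both (\<lambda>k. dist (iter g f k z) (xs k)))"
    using Lg e3 unfolding L_shadowing_def by blast
  define \<delta> where "\<delta> = min (min df dg) (\<epsilon>/3)"
  have dp: "\<delta> > 0" "\<delta> \<le> \<epsilon>/3" "\<delta> \<le> df" "\<delta> \<le> dg" using dfp dgp ep by (auto simp: \<delta>_def)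
  have Hf': "\<forall>xs. (\<forall>k. xs k \<in> X) \<and> (\<forall>k. dist (f (xs k)) (xs (k + 1)) \<le> \<delta>) \<and>
       tends_to_zero_both (\<lambda>k. dist (f (xs k)) (xs (k + 1)))
       \<longrightarrow> (\<exists>z\<in>X. (\<forall>k. dist (iter f g k z) (xs k) \<le> \<epsilon>/3) \<and>
                  tends_to_zero_both (\<lambda>k. dist (iter f g k z) (xs k)))"
  proof (intro allI impI)
    fix xs :: "int \<Rightarrow> 'a" assume H: "(\<forall>k. xs k \<in> X) \<and> (\<forall>k. dist (f (xs k)) (xs (k + 1)) \<le> \<delta>) \<and>
       tends_to_zero_both (\<lambda>k. dist (f (xs k)) (xs (k + 1)))"
    then have "(\<forall>k. dist (f (xs k)) (xs (k + 1)) \<le> df)" using dp(3) by (meson order_trans)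
    then show "\<exists>z\<in>X. (\<forall>k. dist (iter f g k z) (xs k) \<le> \<epsilon>/3) \<and>
                  tends_to_zero_both (\<lambda>k. dist (iter f g k z) (xs k))"
      using Hf H by blast
  qed
  have Hg': "\<forall>xs. (\<forall>k. xs k \<in> X) \<and> (\<forall>k. dist (g (xs k)) (xs (k + 1)) \<le> \<delta>) \<and>
       tends_to_zero_both (\<lambda>k. dist (g (xs k)) (xs (k + 1)))
       \<longrightarrow> (\<exists>z\<in>X. (\<forall>k. dist (iter g f k z) (xs k) \<le> \<epsilon>/3) \<and>
                  tends_to_zero_both (\<lambda>k. dist (iter g f k z) (xs k)))"
  proof (intro allI impI)
    fix xs :: "int \<Rightarrow> 'a" assume H: "(\<forall>k. xs k \<in> X) \<and> (\<forall>k. dist (g (xs k)) (xs (k + 1)) \<le> \<delta>) \<and>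
       tends_to_zero_both (\<lambda>k. dist (g (xs k)) (xs (k + 1)))"
    then have "(\<forall>k. dist (g (xs k)) (xs (k + 1)) \<le> dg)" using dp(4) by (meson order_trans)
    then show "\<exists>z\<in>X. (\<forall>k. dist (iter g f k z) (xs k) \<le> \<epsilon>/3) \<and>
                  tends_to_zero_both (\<lambda>k. dist (iter g f k z) (xs k))"
      using Hg H by blast
  qed
  show "\<exists>\<delta>>0. \<forall>x\<in>X. V_s X f \<epsilon> x \<inter> V_u X g \<epsilon> x = {x} \<longrightarrow> dyn_ball X f g \<delta> x = {x}"
  proof (intro exI[of _ \<delta>] conjI ballI impI)
    show "\<delta> > 0" by (rule dp(1))
    fix x assume xX: "x \<in> X" and V: "V_s X f \<epsilon> x \<inter> V_u X g \<epsilon> x = {x}"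
    have V': "V_s X g \<epsilon> x \<inter> V_u X f \<epsilon> x = {x}"
      using V by (simp add: V_swap Int_commute)
    show "dyn_ball X f g \<delta> x = {x}"
    proof
      show "dyn_ball X f g \<delta> x \<subseteq> {x}"
      proof
        fix y assume y: "y \<in> dyn_ball X f g \<delta> x"
        have y': "y \<in> dyn_ball X g f \<delta> x" using y by (simp add: dyn_ball_swap)
        have st: "(\<lambda>n. dist ((f^^n) x) ((f^^n) y)) \<longlonglongrightarrow> 0"
          by (rule main_stable[OF assms(2) assms(1) assms(3) ep dp(1) dp(2) Hf' xX V y])
        have ust: "(\<lambda>n. dist ((g^^n) x) ((g^^n) y)) \<longlonglongrightarrow> 0"
          by (rule main_stable[OF hom' assms(1) Lg ep dp(1) dp(2) Hg' xX V' y'])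
        have yX: "y \<in> X" and yd: "\<And>k. dist (iter f g k x) (iter f g k y) \<le> \<delta>"
          using y by (auto simp: dyn_ball_def)
        have de: "\<delta> \<le> \<epsilon>" using dp(2) ep by linarith
        have ls: "\<forall>n. dist ((f^^n) x) ((f^^n) y) \<le> \<epsilon>"
        proof
          fix n show "dist ((f^^n) x) ((f^^n) y) \<le> \<epsilon>" using yd[of "int n"] de by (simp add: iter_nat)
        qed
        have lu: "\<forall>n. dist ((g^^n) x) ((g^^n) y) \<le> \<epsilon>"
        proof
          fix n show "dist ((g^^n) x) ((g^^n) y) \<le> \<epsilon>" using yd[of "- int n"] de by (simp add: iter_neg_nat)
        qed
        have "y \<in> V_s X f \<epsilon> x \<inter> V_u X g \<epsilon> x" using st ust ls lu yX
          by (simp add: V_s_def V_u_def stable_set_def unstable_set_def local_stable_def local_unstable_def)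
        then show "y \<in> {x}" using V by blast
      qed
      show "{x} \<subseteq> dyn_ball X f g \<delta> x" using xX dp(1) by (simp add: dyn_ball_def)
    qed
  qed
qed

end
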